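(* Let $(\widetilde M,\tilde p)$ be a non-compact model surface of revolution with metric $dt^2+f(t)^2d\theta^2$, where $f''(t)+G(t)f(t)=0$, $f(0)=0$, $f'(0)=1$. If $\widetilde M$ admits a finite total curvature $c(\widetilde M)<2\pi$, then the solution $m$ of $m''(t)+G_-(t)m(t)=0$ with $m(0)=0$, $m'(0)=1$, where $G_-:=\min\{G,0\}$, defines a non-compact model surface of revolution $(M^*,p^* )$ with metric $dt^2+m(t)^2d\theta^2$ which admits a finite total curvature.
   Context: A non-compact model surface of revolution is $\mathbb{R}^2$ with the metric $dt^2+h(t)^2d\theta^2$, where $(t,\theta)$ are polar coordinates about the origin and $h:(0,\infty)\to(0,\infty)$ extends to an odd function around $0$ with $h'(0)=1$; its Gauss curvature is $-h''/h$. The total curvature of a surface with Gauss curvature $G$ is $\int G_+\,dA+\int G_-\,dA$ ($G_+=\max\{G,0\}$, $G_-=\min\{G,0\}$, $dA=h(t)\,dt\,d\theta$), and it is finite if both integrals are finite. *)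

theory Defs
  imports "HOL-Analysis.Analysis"
begin

definition C2 :: "(real \<Rightarrow> real) \<Rightarrow> bool" where
  "C2 h \<longleftrightarrow> (\<forall>t. h differentiable (at t)) \<and> (\<forall>t. deriv h differentiable (at t))
            \<and> continuous_on UNIV (deriv (deriv h))"

text \<open>Warping function of a non-compact model surface of revolution
  (metric dt^2 + h(t)^2 dtheta^2 on R^2, polar coordinates about the origin).
  The function h is given on all of R and required to be the odd extension:
  odd, positive on (0,inf), h'(0) = 1, twice continuously differentiable.\<close>
definition model_surface :: "(real \<Rightarrow> real) \<Rightarrow> bool" where
  "model_surface h \<longleftrightarrow> C2 h \<and> (\<forall>t. h (- t) = - h t) \<and> deriv h 0 = 1
      \<and> (\<forall>t>0. h t > 0)"

definition gauss_curv :: "(real \<Rightarrow> real) \<Rightarrow> real \<Rightarrow> real" where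
  "gauss_curv h t = - deriv (deriv h) t / h t"

text \<open>Integrals of G_+ dA and G_- dA with dA = h dt dtheta, t in (0,inf),
  theta in [0,2pi); the theta-integration contributes the factor 2 pi.\<close>
definition pos_curv_integral :: "(real \<Rightarrow> real) \<Rightarrow> real" where
  "pos_curv_integral h = 2 * pi * (LINT t:{0<..}|lborel. max (gauss_curv h t) 0 * h t)"

definition neg_curv_integral :: "(real \<Rightarrow> real) \<Rightarrow> real" where
  "neg_curv_integral h = 2 * pi * (LINT t:{0<..}|lborel. min (gauss_curv h t) 0 * h t)"

definition finite_total_curvature :: "(real \<Rightarrow> real) \<Rightarrow> bool" where
  "finite_total_curvature h \<longleftrightarrow>
     set_integrable lborel {0<..} (\<lambda>t. max (gauss_curv h t) 0 * h t) \<and>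
     set_integrable lborel {0<..} (\<lambda>t. min (gauss_curv h t) 0 * h t)"

definition total_curvature :: "(real \<Rightarrow> real) \<Rightarrow> real" where
  "total_curvature h = pos_curv_integral h + neg_curv_integral h"

end

theory Submission
  imports Defs
begin

lemma ode_zero:
  fixes w w' r :: "real \<Rightarrow> real"
  assumes dw: "\<And>t. (w has_real_derivative w' t) (at t)"
    and dw': "\<And>t. (w' has_real_derivative r t * w t) (at t)"
    and rc: "continuous_on UNIV r" and w0: "w 0 = 0" and w'0: "w' 0 = 0"
  shows "w t0 = 0"
proof -
  define T where "T = \<bar>t0\<bar>"
  have "compact (r ` {-T..T})"
    by (intro compact_continuous_image continuous_on_subset[OF rc]) auto
  then obtain K where K: "\<forall>y\<in>r ` {-T..T}. norm y \<le> K"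
    using compact_imp_bounded bounded_iff by metis
  define C where "C = 1 + max K 0"
  define E where "E x = w x * w x + w' x * w' x" for x
  have dE: "(E has_real_derivative 2*w x*w' x + 2*w' x*(r x*w x)) (at x)" for x
    unfolding E_def by (auto intro!: derivative_eq_intros dw dw' simp: algebra_simps)
  have Enn: "E x \<ge> 0" for x unfolding E_def by simp
  have wE: "w x * w x \<le> E x" for x unfolding E_def by simp
  have bound: "\<bar>2*w x*w' x + 2*w' x*(r x*w x)\<bar> \<le> C * E x" if "x \<in> {-T..T}" for x
  proof -
    have rx: "\<bar>r x\<bar> \<le> K" using K that by auto
    have 1: "2*\<bar>w x\<bar>*\<bar>w' x\<bar> \<le> E x"
      using sum_squares_bound[of "\<bar>w x\<bar>" "\<bar>w' x\<bar>"] unfolding E_def by (simp add: power2_eq_square)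
    have "\<bar>2*w x*w' x + 2*w' x*(r x*w x)\<bar> = (2*\<bar>w x\<bar>*\<bar>w' x\<bar>) * \<bar>1 + r x\<bar>"
    proof -
      have "2*w x*w' x + 2*w' x*(r x*w x) = (2*w x*w' x)*(1+r x)" by (simp add: algebra_simps)
      then show ?thesis by (simp add: abs_mult)
    qed
    also have "\<dots> \<le> E x * C"
      apply (rule mult_mono[OF 1]) using rx by (auto simp: C_def Enn)
    finally show ?thesis by (simp add: mult.commute)
  qed
  show ?thesis
  proof (cases "t0 \<ge> 0")
    case True
    define F where "F x = E x * exp (-C*x)" for x
    have "F t0 \<le> F 0"
    proof (rule DERIV_nonpos_imp_nonincreasing[OF True])
      fix x assume x: "0 \<le> x" "x \<le> t0"
      have "(F has_real_derivative (2*w x*w' x + 2*w' x*(r x*w x) - C * E x) * exp (-C*x)) (at x)"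
        unfolding F_def by (auto intro!: derivative_eq_intros dE simp: algebra_simps)
      moreover have "(2*w x*w' x + 2*w' x*(r x*w x) - C * E x) * exp (-C*x) \<le> 0"
        using bound[of x] x T_def by (intro mult_nonpos_nonneg) auto
      ultimately show "\<exists>y. DERIV F x :> y \<and> y \<le> 0" by blast
    qed
    also have "F 0 = 0" by (simp add: F_def E_def w0 w'0)
    finally have "E t0 \<le> 0" by (simp add: F_def mult_le_0_iff)
    with wE[of t0] show ?thesis by (metis mult_eq_0_iff not_sum_squares_lt_zero order_antisym_conv order_trans zero_le_square)
  next
    case False
    define F where "F x = E x * exp (C*x)" for x
    have "F t0 \<le> F 0"
    proof (rule DERIV_nonneg_imp_nondecreasing[of t0 0 F])
      show "t0 \<le> 0" using False by simp
      fix x assume x: "t0 \<le> x" "x \<le> 0"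
      have "(F has_real_derivative (2*w x*w' x + 2*w' x*(r x*w x) + C * E x) * exp (C*x)) (at x)"
        unfolding F_def by (auto intro!: derivative_eq_intros dE simp: algebra_simps)
      moreover have "(2*w x*w' x + 2*w' x*(r x*w x) + C * E x) * exp (C*x) \<ge> 0"
        using bound[of x] x T_def False by (intro mult_nonneg_nonneg) auto
      ultimately show "\<exists>y. DERIV F x :> y \<and> y \<ge> 0" by blast
    qed
    also have "F 0 = 0" by (simp add: F_def E_def w0 w'0)
    finally have "E t0 \<le> 0" by (simp add: F_def mult_le_0_iff)
    with wE[of t0] show ?thesis by (metis mult_eq_0_iff not_sum_squares_lt_zero order_antisym_conv order_trans zero_le_square)
  qed
qed

lemma pos_sol:
  fixes m m' q :: "real \<Rightarrow> real"
  assumes dm: "\<And>t. (m has_real_derivative m' t) (at t)"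
    and dm': "\<And>t. (m' has_real_derivative q t * m t) (at t)"
    and qnn: "\<And>t. q t \<ge> 0" and m0: "m 0 = 0" and m'0: "m' 0 = 1"
  shows "\<forall>t>0. m t > 0"
proof (rule ccontr)
  assume "\<not> (\<forall>t>0. m t > 0)"
  then obtain t1 where t1: "t1 > 0" "m t1 \<le> 0" by (auto simp: not_less)
  obtain d where d: "d > 0" "\<And>h. h > 0 \<Longrightarrow> h < d \<Longrightarrow> m 0 < m (0 + h)"
    using DERIV_pos_inc_right[OF dm[of 0]] m'0 by auto
  have "t1 \<ge> d" using d(2)[of t1] t1 m0 by force
  define e where "e = d/2"
  define Z where "Z = {t. e \<le> t} \<inter> {t. t \<le> t1} \<inter> {t. m t \<le> 0}"
  have mc: "continuous_on UNIV m"
    by (meson DERIV_isCont continuous_at_imp_continuous_on dm)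
  have "closed Z" unfolding Z_def
    by (intro closed_Int closed_Collect_le continuous_intros mc)
  moreover have "t1 \<in> Z" using t1 \<open>t1 \<ge> d\<close> d by (auto simp: Z_def e_def)
  moreover have bb: "bdd_below Z" unfolding Z_def by (auto intro: bdd_belowI[of _ e])
  ultimately have sZ: "Inf Z \<in> Z" using closed_contains_Inf by blast
  define s where "s = Inf Z"
  have s: "e \<le> s" "m s \<le> 0" using sZ by (auto simp: Z_def s_def)
  have pos: "m x > 0" if "0 < x" "x < s" for x
  proof (cases "x < d")
    case True then show ?thesis using d(2)[of x] that m0 by auto
  next
    case False
    have "x \<notin> Z" using that cInf_lower[OF _ bb, of x] unfolding s_def by auto
    moreover have "x \<le> t1" using that sZ by (auto simp: Z_def s_def)
    ultimately show ?thesis using False d by (auto simp: Z_def e_def)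
  qed
  have m'ge: "m' x \<ge> 1" if "0 \<le> x" "x < s" for x
  proof -
    have "m' 0 \<le> m' x"
    proof (rule DERIV_nonneg_imp_nondecreasing[of 0 x m'])
      show "0 \<le> x" by fact
      fix y assume y: "0 \<le> y" "y \<le> x"
      have "m y \<ge> 0" using pos[of y] y that m0 by (cases "y = 0") auto
      then show "\<exists>z. DERIV m' y :> z \<and> z \<ge> 0" using dm' qnn by (meson mult_nonneg_nonneg)
    qed
    then show ?thesis using m'0 by simp
  qed
  have "s > 0" using s d by (simp add: e_def)
  obtain l z where z: "0 < z" "z < s" "DERIV m z :> l" "m s - m 0 = (s - 0) * l"
    using MVT[OF \<open>s > 0\<close>, of m] continuous_on_subset[OF mc] dm real_differentiable_def by blast
  have "l = m' z" using DERIV_unique[OF z(3) dm[of z]] .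
  then have "m s \<ge> s" using z m'ge[of z] m0 by (simp add: mult_le_cancel_left1)
  then show False using s \<open>s > 0\<close> by simp
qed

lemma C2_D:
  assumes "C2 h"
  shows "(h has_real_derivative deriv h t) (at t)"
    and "(deriv h has_real_derivative deriv (deriv h) t) (at t)"
  using assms unfolding C2_def by (auto simp: DERIV_deriv_iff_real_differentiable)

lemma vd: "(F has_real_derivative d) (at x) \<Longrightarrow> (F has_vector_derivative d) (at x within S)"
  by (simp add: has_real_derivative_iff_has_vector_derivative has_vector_derivative_at_within)

theorem lemma4p2:
  fixes f G m :: "real \<Rightarrow> real"
  assumes f_model: "model_surface f"
    and G_cont: "continuous_on UNIV G"
    and f_eq: "\<And>t. deriv (deriv f) t + G t * f t = 0"
    and fin: "finite_total_curvature f"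
    and small: "total_curvature f < 2 * pi"
    and m_C2: "C2 m"
    and m_eq: "\<And>t. deriv (deriv m) t + min (G t) 0 * m t = 0"
    and m0: "m 0 = 0"
    and m'0: "deriv m 0 = 1"
  shows "model_surface m \<and> finite_total_curvature m"
proof -
  define q where "q t = - min (G t) 0" for t
  have qnn: "q t \<ge> 0" for t by (simp add: q_def)
  have qc: "continuous_on UNIV q" unfolding q_def by (intro continuous_intros G_cont)
  have dm: "(m has_real_derivative deriv m t) (at t)" for t using C2_D[OF m_C2] by auto
  have dm': "(deriv m has_real_derivative q t * m t) (at t)" for t
  proof -
    have "deriv (deriv m) t = q t * m t" using m_eq[of t] by (simp add: q_def algebra_simps)
    then show ?thesis using C2_D(2)[OF m_C2, of t] by simp
  qed
  have mpos: "\<forall>t>0. m t > 0" by (rule pos_sol[OF dm dm' qnn m0 m'0])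
  have fC2: "C2 f" and fodd: "\<And>t. f (-t) = - f t" and f'0: "deriv f 0 = 1"
     and fpos: "\<And>t. t > 0 \<Longrightarrow> f t > 0"
    using f_model unfolding model_surface_def by auto
  have df: "(f has_real_derivative deriv f t) (at t)" for t using C2_D[OF fC2] by auto
  have df': "(deriv f has_real_derivative deriv (deriv f) t) (at t)" for t using C2_D[OF fC2] by auto
  have f00: "f 0 = 0" using fodd[of 0] by simp
  have fc: "continuous_on UNIV f" by (meson DERIV_isCont continuous_at_imp_continuous_on df)
  have mc: "continuous_on UNIV m" by (meson DERIV_isCont continuous_at_imp_continuous_on dm)
  have f'c: "continuous_on UNIV (deriv f)" by (meson DERIV_isCont continuous_at_imp_continuous_on df')
  have m'c: "continuous_on UNIV (deriv m)" by (meson DERIV_isCont continuous_at_imp_continuous_on dm')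
  have f'even: "deriv f (-t) = deriv f t" for t
  proof -
    have "DERIV (\<lambda>x. f (- x)) t :> - deriv f (-t)" using df[of "-t"] DERIV_mirror by blast
    moreover have "(\<lambda>x. f (- x)) = (\<lambda>x. - f x)" using fodd by auto
    ultimately have "DERIV (\<lambda>x. - f x) t :> - deriv f (-t)" by simp
    moreover have "DERIV (\<lambda>x. - f x) t :> - deriv f t" using df[of t] by (rule DERIV_minus)
    ultimately show ?thesis using DERIV_unique by force
  qed
  have f''odd: "deriv (deriv f) (-t) = - deriv (deriv f) t" for t
  proof -
    have "DERIV (\<lambda>x. deriv f (- x)) t :> - deriv (deriv f) (-t)" using df'[of "-t"] DERIV_mirror by blast
    moreover have "(\<lambda>x. deriv f (- x)) = deriv f" using f'even by auto
    ultimately show ?thesis using DERIV_unique df'[of t] by force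
  qed
  have Geven: "G (-t) = G t" for t
  proof -
    have key: "G (-t) = G t" if "t > 0" for t
    proof -
      have "G (-t) * f (-t) = - G t * f t" using f_eq[of "-t"] f_eq[of t] f''odd[of t] by simp
      then have "G (-t) * f t = G t * f t" using fodd[of t] by simp
      then show ?thesis using fpos[OF that] by simp
    qed
    show ?thesis
      by (cases "t > 0"; cases "t = 0") (use key[of t] key[of "-t"] in auto)
  qed
  have qeven: "q (-t) = q t" for t by (simp add: q_def Geven)
  have modd: "m (-t) = - m t" for t
  proof -
    define w where "w x = m x + m (-x)" for x
    define w' where "w' x = deriv m x - deriv m (-x)" for x
    have dw: "(w has_real_derivative w' x) (at x)" for x
    proof -
      have "DERIV (\<lambda>x. m (- x)) x :> - deriv m (-x)" using dm[of "-x"] DERIV_mirror by blast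
      then show ?thesis unfolding w_def w'_def using dm[of x] by (auto intro!: derivative_eq_intros)
    qed
    have dw': "(w' has_real_derivative q x * w x) (at x)" for x
    proof -
      have "DERIV (\<lambda>x. deriv m (- x)) x :> - (q (-x) * m (-x))" using dm'[of "-x"] DERIV_mirror by blast
      then have "DERIV w' x :> q x * m x - - (q (-x) * m (-x))"
        unfolding w'_def using dm'[of x] by (intro DERIV_diff)
      then show ?thesis by (simp add: w_def qeven algebra_simps)
    qed
    have "w t = 0" by (rule ode_zero[OF dw dw' qc]) (auto simp: w_def w'_def m0)
    then show ?thesis by (simp add: w_def)
  qed
  have ms: "model_surface m"
    unfolding model_surface_def using m_C2 modd m'0 mpos by auto
  define Kf where "Kf = gauss_curv f"
  have Kf: "Kf t = G t" if "t > 0" for t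
    using f_eq[of t] fpos[OF that] unfolding Kf_def gauss_curv_def
    by (simp add: field_simps)
  have eq1: "indicator {0..} x *\<^sub>R (G x * f x) =
      indicator {0<..} x *\<^sub>R (max (gauss_curv f x) 0 * f x) + indicator {0<..} x *\<^sub>R (min (gauss_curv f x) 0 * f x)" for x
  proof (cases "x > 0")
    case True then show ?thesis using Kf[OF True] by (simp add: Kf_def indicator_def max_def min_def algebra_simps)
  next
    case False then show ?thesis using f00 by (cases "x = 0") (auto simp: indicator_def)
  qed
  have i1: "integrable lborel (\<lambda>x. indicator {0<..} x *\<^sub>R (max (gauss_curv f x) 0 * f x))"
   and i2: "integrable lborel (\<lambda>x. indicator {0<..} x *\<^sub>R (min (gauss_curv f x) 0 * f x))"
    using fin unfolding finite_total_curvature_def set_integrable_def by auto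
  have Gfint: "set_integrable lborel {0..} (\<lambda>x. G x * f x)"
    unfolding set_integrable_def eq1 using i1 i2 by (rule Bochner_Integration.integrable_add)
  define L0 where "L0 = (LINT x:{0..}|lborel. G x * f x)"
  have "L0 = (LINT x:{0<..}|lborel. max (gauss_curv f x) 0 * f x) + (LINT x:{0<..}|lborel. min (gauss_curv f x) 0 * f x)"
    unfolding L0_def set_lebesgue_integral_def eq1 using i1 i2 by (rule Bochner_Integration.integral_add)
  then have "total_curvature f = 2 * pi * L0"
    unfolding total_curvature_def pos_curv_integral_def neg_curv_integral_def by (simp add: algebra_simps)
  then have L0: "L0 < 1" using small by simp
  have lim1: "((\<lambda>b. LINT x:{0..b}|lborel. G x * f x) \<longlongrightarrow> L0) at_top"
    unfolding L0_def by (rule tendsto_set_lebesgue_integral_at_top[OF _ Gfint]) auto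
  have ftc: "(LINT x:{0..b}|lborel. G x * f x) = 1 - deriv f b" if "b \<ge> 0" for b
  proof -
    have "(LINT x:{0..b}|lborel. G x * f x) = (LBINT x=ereal 0..ereal b. G x * f x)"
      using interval_integral_Icc[OF that, of "\<lambda>x. G x * f x"] by simp
    also have "\<dots> = (- deriv f b) - (- deriv f 0)"
    proof (rule interval_integral_FTC_finite)
      show "continuous_on {min 0 b..max 0 b} (\<lambda>x. G x * f x)"
        by (intro continuous_intros continuous_on_subset[OF G_cont] continuous_on_subset[OF fc]) auto
      fix x
      have "DERIV (\<lambda>x. - deriv f x) x :> - deriv (deriv f) x" using df'[of x] by (rule DERIV_minus)
      also have "- deriv (deriv f) x = G x * f x" using f_eq[of x] by (simp add: algebra_simps)
      finally show "((\<lambda>x. - deriv f x) has_vector_derivative G x * f x) (at x within {min 0 b..max 0 b})"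
        by (rule vd)
    qed
    finally show ?thesis using f'0 by simp
  qed
  have "((\<lambda>b. 1 - deriv f b) \<longlongrightarrow> L0) at_top"
    using lim1 by (rule Lim_transform_eventually) (auto simp: eventually_at_top_linorder ftc intro!: exI[of _ 0])
  then have "((\<lambda>b. 1 - (1 - deriv f b)) \<longlongrightarrow> 1 - L0) at_top" by (intro tendsto_intros)
  then have limf': "(deriv f \<longlongrightarrow> 1 - L0) at_top" by simp
  define a where "a = (1 - L0) / 2"
  have a: "a > 0" "a < 1 - L0" using L0 by (auto simp: a_def)
  obtain N where N: "\<And>b. b \<ge> N \<Longrightarrow> a < deriv f b"
    using order_tendstoD(1)[OF limf' a(2)] by (auto simp: eventually_at_top_linorder)
  define T0 where "T0 = max N 1"
  have T0: "T0 > 0" "\<And>b. b \<ge> T0 \<Longrightarrow> a < deriv f b" using N by (auto simp: T0_def)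
  define c where "c = min (f T0 / T0) a"
  have c: "c > 0" using fpos[OF T0(1)] T0 a by (auto simp: c_def)
  have fge: "f x \<ge> c * x" if "x \<ge> T0" for x
  proof -
    have "f T0 - a * T0 \<le> f x - a * x"
    proof (rule DERIV_nonneg_imp_nondecreasing[OF that])
      fix y assume "T0 \<le> y" "y \<le> x"
      then show "\<exists>z. DERIV (\<lambda>x. f x - a * x) y :> z \<and> z \<ge> 0"
        using T0(2)[of y] df[of y] by (intro exI[of _ "deriv f y - a * 1"]) (auto intro!: derivative_eq_intros)
    qed
    moreover have "c * T0 \<le> f T0"
    proof -
      have "c * T0 \<le> (f T0 / T0) * T0" using T0 by (intro mult_right_mono) (auto simp: c_def)
      then show ?thesis using T0 by simp
    qed
    moreover have "c * (x - T0) \<le> a * (x - T0)" using that by (intro mult_right_mono) (auto simp: c_def)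
    ultimately show ?thesis by (simp add: algebra_simps)
  qed
  define h where "h x = q x * f x" for x
  have hc: "continuous_on UNIV h" unfolding h_def by (intro continuous_intros qc fc)
  have "(\<lambda>x. indicator {0<..} x *\<^sub>R h x) = (\<lambda>x. - (indicator {0<..} x *\<^sub>R (min (gauss_curv f x) 0 * f x)))"
  proof
    fix x show "indicator {0<..} x *\<^sub>R h x = - (indicator {0<..} x *\<^sub>R (min (gauss_curv f x) 0 * f x))"
      using Kf[of x] by (cases "x > 0") (auto simp: h_def q_def Kf_def indicator_def)
  qed
  then have hint: "set_integrable lborel {0<..} h"
    unfolding set_integrable_def using i2 by simp
  define I where "I = integral {0<..} h"
  have hint2: "h integrable_on {0<..}" using set_borel_integral_eq_integral(1)[OF hint] .
  have hnn: "h x \<ge> 0" if "x > 0" for x using fpos[OF that] qnn[of x] by (simp add: h_def)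
  have m''nn: "q x * m x \<ge> 0" if "x \<ge> 0" for x
  proof (cases "x = 0")
    case False then have "m x > 0" using mpos that by auto
    then show ?thesis using qnn[of x] by simp
  qed (simp add: m0)
  have m'mono: "deriv m x \<le> deriv m y" if "0 \<le> x" "x \<le> y" for x y
    by (rule DERIV_nonneg_imp_nondecreasing[OF that(2)]) (use dm' m''nn that in force)
  have m'ge1: "deriv m x \<ge> 1" if "x \<ge> 0" for x using m'mono[of 0 x] that m'0 by simp
  have mle: "m x \<le> x * deriv m x" if "x \<ge> 0" for x
  proof -
    have "0 * deriv m 0 - m 0 \<le> x * deriv m x - m x"
    proof (rule DERIV_nonneg_imp_nondecreasing[OF that, of "\<lambda>x. x * deriv m x - m x"])
      fix y assume y: "0 \<le> y" "y \<le> x"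
      have "DERIV (\<lambda>x. x * deriv m x - m x) y :> 1 * deriv m y + y * (q y * m y) - deriv m y"
        using dm dm' by (auto intro!: derivative_eq_intros)
      moreover have "1 * deriv m y + y * (q y * m y) - deriv m y \<ge> 0" using m''nn[of y] y by simp
      ultimately show "\<exists>z. DERIV (\<lambda>x. x * deriv m x - m x) y :> z \<and> z \<ge> 0" by blast
    qed
    then show ?thesis using m0 by simp
  qed
  have lnb: "c * (ln (deriv m T) - ln (deriv m T0)) \<le> I" if "T \<ge> T0" for T
  proof -
    define \<rho> where "\<rho> x = q x * m x / deriv m x" for x
    have "(\<rho> has_integral (ln (deriv m T) - ln (deriv m T0))) {T0..T}"
    proof (rule fundamental_theorem_of_calculus[OF that])
      fix x assume x: "x \<in> {T0..T}"
      have "deriv m x > 0" using m'ge1[of x] x T0 by auto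
      then have "DERIV (\<lambda>x. ln (deriv m x)) x :> q x * m x / deriv m x"
        using dm'[of x] by (auto intro!: derivative_eq_intros simp: field_simps)
      then show "((\<lambda>x. ln (deriv m x)) has_vector_derivative \<rho> x) (at x within {T0..T})"
        unfolding \<rho>_def by (rule vd)
    qed
    then have i\<rho>: "((\<lambda>x. c * \<rho> x) has_integral c * (ln (deriv m T) - ln (deriv m T0))) {T0..T}"
      by (rule has_integral_mult_right)
    have ih: "(h has_integral integral {T0..T} h) {T0..T}"
      using integrable_continuous_interval[OF continuous_on_subset[OF hc]] by blast
    have "c * (ln (deriv m T) - ln (deriv m T0)) \<le> integral {T0..T} h"
    proof (rule has_integral_le[OF i\<rho> ih])
      fix x assume x: "x \<in> {T0..T}"
      have m'p: "deriv m x > 0" using m'ge1[of x] x T0 by auto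
      have "q x * m x \<le> q x * (x * deriv m x)" using mle[of x] x T0 qnn[of x] by (intro mult_left_mono) auto
      then have "\<rho> x \<le> q x * x" using m'p by (simp add: \<rho>_def divide_simps algebra_simps)
      then have "c * \<rho> x \<le> q x * (c * x)" using c by (simp add: algebra_simps mult_left_mono)
      also have "\<dots> \<le> q x * f x" using fge[of x] x qnn[of x] by (intro mult_left_mono) auto
      finally show "c * \<rho> x \<le> h x" by (simp add: h_def)
    qed
    also have "integral {T0..T} h \<le> I"
      unfolding I_def
      by (rule integral_subset_le) (use T0 hnn hint2 integrable_continuous_interval[OF continuous_on_subset[OF hc]] in auto)
    finally show ?thesis .
  qed
  define B where "B = max (deriv m T0) (exp (ln (deriv m T0) + I / c))"
  have m'B: "deriv m x \<le> B" if "x \<ge> 0" for x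
  proof (cases "x \<le> T0")
    case True then show ?thesis using m'mono[of x T0] that by (simp add: B_def)
  next
    case False
    then have "ln (deriv m x) - ln (deriv m T0) \<le> I / c" using lnb[of x] c by (simp add: field_simps)
    then have "ln (deriv m x) \<le> ln (deriv m T0) + I / c" by simp
    then have "exp (ln (deriv m x)) \<le> exp (ln (deriv m T0) + I / c)" by simp
    moreover have "deriv m x > 0" using m'ge1[of x] that by simp
    ultimately show ?thesis by (simp add: B_def)
  qed
  define S where "S = Sup (deriv m ` {0..})"
  have bdd: "bdd_above (deriv m ` {0..})" using m'B by (auto intro!: bdd_aboveI[of _ B])
  have limm': "(deriv m \<longlongrightarrow> S) at_top"
  proof (rule increasing_tendsto)
    show "\<forall>\<^sub>F n in at_top. deriv m n \<le> S"
      unfolding S_def eventually_at_top_linorder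
      by (intro exI[of _ 0] allI impI cSup_upper bdd) auto
    fix x assume "x < S"
    then obtain y where y: "y \<ge> 0" "x < deriv m y"
      unfolding S_def using less_cSup_iff[OF _ bdd] by force
    show "\<forall>\<^sub>F n in at_top. x < deriv m n"
      unfolding eventually_at_top_linorder using y m'mono[of y] by (intro exI[of _ y]) (auto intro: less_le_trans)
  qed
  have qmint: "set_integrable lborel (einterval (ereal 0) \<infinity>) (\<lambda>x. q x * m x)"
  proof (rule interval_integral_FTC_nonneg(1)[where F="deriv m" and A="deriv m 0" and B=S])
    show "ereal 0 < \<infinity>" by simp
    fix x show "DERIV (deriv m) x :> q x * m x" by (rule dm')
    show "isCont (\<lambda>x. q x * m x) x"
      using continuous_on_eq_continuous_at[of UNIV] qc mc by (auto intro!: continuous_intros)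
  next
    show "AE x in lborel. ereal 0 < ereal x \<longrightarrow> ereal x < \<infinity> \<longrightarrow> 0 \<le> q x * m x"
      using m''nn by auto
    show "((deriv m \<circ> real_of_ereal) \<longlongrightarrow> deriv m 0) (at_right (ereal 0))"
      unfolding ereal_tendsto_simps1
      using DERIV_isCont[OF dm'[of 0]] unfolding isCont_def by (rule tendsto_within_subset) simp
    show "((deriv m \<circ> real_of_ereal) \<longlongrightarrow> S) (at_left \<infinity>)"
      unfolding ereal_tendsto_simps1 by (rule limm')
  qed
  have gm: "gauss_curv m x = min (G x) 0" if "x > 0" for x
  proof -
    have "deriv (deriv m) x = - (min (G x) 0 * m x)" using m_eq[of x] by (simp add: algebra_simps)
    moreover have "m x > 0" using mpos that by auto
    ultimately show ?thesis by (simp add: gauss_curv_def)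
  qed
  have fm: "finite_total_curvature m"
    unfolding finite_total_curvature_def set_integrable_def
  proof
    have "(\<lambda>x. indicator {0<..} x *\<^sub>R (max (gauss_curv m x) 0 * m x)) = (\<lambda>x. 0)"
    proof
      fix x show "indicator {0<..} x *\<^sub>R (max (gauss_curv m x) 0 * m x) = 0"
        using gm[of x] by (cases "x > 0") (auto simp: indicator_def)
    qed
    then show "integrable lborel (\<lambda>x. indicator {0<..} x *\<^sub>R (max (gauss_curv m x) 0 * m x))" by simp
  next
    have "(\<lambda>x. indicator {0<..} x *\<^sub>R (min (gauss_curv m x) 0 * m x)) = (\<lambda>x. - (indicator {0<..} x *\<^sub>R (q x * m x)))"
    proof
      fix x show "indicator {0<..} x *\<^sub>R (min (gauss_curv m x) 0 * m x) = - (indicator {0<..} x *\<^sub>R (q x * m x))"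
        using gm[of x] by (cases "x > 0") (auto simp: indicator_def q_def)
    qed
    then show "integrable lborel (\<lambda>x. indicator {0<..} x *\<^sub>R (min (gauss_curv m x) 0 * m x))"
      using qmint unfolding set_integrable_def by simp
  qed
  show ?thesis using ms fm by blast
qed

end
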